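(* Suppose the $L$-smoothness assumption holds and let $\{w_t\}$, $\{v_t\}$, $\{\hat D_t\}$ be generated by {\tt Scaled SARAH} with probability $p\in(0,1]$. Then for every $t\ge0$, $$\mathbb{E}\left[\|v_{t+1}-\nabla P(w_{t+1})\|^2\right]\le(1-p)\,\mathbb{E}\left[\|v_t-\nabla P(w_t)\|^2\right]+\frac{(1-p)L^2}{\alpha}\mathbb{E}\left[\|w_{t+1}-w_t\|^2_{\hat D_t}\right].$$
   Context: $P=\frac1n\sum_{i=1}^nf_i$ with $f_i:\mathbb{R}^d\to\mathbb{R}$. $L$-smoothness assumption: each $f_i$ and $P$ are twice differentiable with $L$-Lipschitz gradients. $\|x\|_D^2=x^TDx$. For $J\subseteq[n]$, $\nabla^2P_J(w)=\frac1{|J|}\sum_{j\in J}\nabla^2 f_j(w)$; $\odot$ is the Hadamard product; $\mathrm{diag}(x)$ is the diagonal matrix with the entries of $x$. Preconditioner (parameters $\alpha>0$, $\beta\in(0,1)$, $m\ge1$): $D_0=\frac1m\sum_{j=1}^m\mathrm{diag}(z_j\odot\nabla^2P_{\mathcal{J}_j}(w_0)z_j)$, $D_t=\beta D_{t-1}+(1-\beta)\mathrm{diag}(z_t\odot\nabla^2P_{\mathcal{J}_t}(w_t)z_t)$ for $t\ge1$, with independent Rademacher vectors $z$ and random index sets $\mathcal{J}\subseteq[n]$, independent of the gradient samples; $\hat D_t$ diagonal with $(\hat D_t)_{ii}=\max\{\alpha,|(D_t)_{ii}|\}$. {\tt Scaled SARAH} (input $w_0$, step-size $\eta>0$, $p$):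 $v_0=\nabla P(w_0)$; for $t\ge0$: $w_{t+1}=w_t-\eta\hat D_t^{-1}v_t$; draw $i_{t+1}$ uniformly from $[n]$, independently of everything else; with probability $p$ (independent coin), $v_{t+1}=\nabla P(w_{t+1})$, otherwise $v_{t+1}=v_t+\nabla f_{i_{t+1}}(w_{t+1})-\nabla f_{i_{t+1}}(w_t)$; update $\hat D_{t+1}$. *)

theory Defs
  imports "HOL-Probability.Probability"
begin

text \<open>Scaled SARAH, modelled as a Markov chain of states (w_t, v_t, D_t) with
  finitely supported distributions. Vectors live in real^'d; the diagonal
  matrices D_t, hat D_t are represented by their diagonal vectors.
  Indices of the component functions are 0..n-1.\<close>

definition rademacher :: "(real^'d) pmf" where
  "rademacher = pmf_of_set {z. \<forall>i. z $ i = 1 \<or> z $ i = -1}"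

text \<open>Gradient of P = (1/n) sum f_i, given gradients g i of f i.\<close>
definition gradP :: "nat \<Rightarrow> (nat \<Rightarrow> real^'d \<Rightarrow> real^'d) \<Rightarrow> real^'d \<Rightarrow> real^'d" where
  "gradP n g w = (1 / real n) *\<^sub>R (\<Sum>i<n. g i w)"

text \<open>Diagonal of diag(z o (Hess P_J(w)) z), given Hessians H j of f j.\<close>
definition hds :: "(nat \<Rightarrow> real^'d \<Rightarrow> real^'d^'d) \<Rightarrow> real^'d \<Rightarrow> real^'d \<Rightarrow> nat set \<Rightarrow> real^'d" where
  "hds H w z J = (\<chi> k. z $ k * ((((1 / real (card J)) *\<^sub>R (\<Sum>j\<in>J. H j w)) *v z) $ k))"

definition dhat :: "real \<Rightarrow> real^'d \<Rightarrow> real^'d" where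
  "dhat \<alpha> D = (\<chi> i. max \<alpha> \<bar>D $ i\<bar>)"

definition sarah_w :: "real \<Rightarrow> real \<Rightarrow> real^'d \<Rightarrow> real^'d \<Rightarrow> real^'d \<Rightarrow> real^'d" where
  "sarah_w \<eta> \<alpha> w v D = w - \<eta> *\<^sub>R (\<chi> i. v $ i / dhat \<alpha> D $ i)"

definition dnorm2 :: "real^'d \<Rightarrow> real^'d \<Rightarrow> real" where
  "dnorm2 d x = (\<Sum>i\<in>UNIV. d $ i * (x $ i)^2)"

primrec d0_sum :: "(nat \<Rightarrow> real^'d \<Rightarrow> real^'d^'d) \<Rightarrow> nat set pmf \<Rightarrow> real^'d \<Rightarrow> nat \<Rightarrow> (real^'d) pmf" where
  "d0_sum H Jd w 0 = return_pmf 0"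
| "d0_sum H Jd w (Suc k) =
     bind_pmf (d0_sum H Jd w k) (\<lambda>s. bind_pmf rademacher (\<lambda>z. bind_pmf Jd (\<lambda>J.
       return_pmf (s + hds H w z J))))"

definition d0_dist :: "(nat \<Rightarrow> real^'d \<Rightarrow> real^'d^'d) \<Rightarrow> nat set pmf \<Rightarrow> real^'d \<Rightarrow> nat \<Rightarrow> (real^'d) pmf" where
  "d0_dist H Jd w m = map_pmf (\<lambda>s. (1 / real m) *\<^sub>R s) (d0_sum H Jd w m)"

definition sarah_step ::
  "nat \<Rightarrow> (nat \<Rightarrow> real^'d \<Rightarrow> real^'d) \<Rightarrow> (nat \<Rightarrow> real^'d \<Rightarrow> real^'d^'d) \<Rightarrow> nat set pmf
   \<Rightarrow> real \<Rightarrow> real \<Rightarrow> real \<Rightarrow> real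
   \<Rightarrow> (real^'d) \<times> (real^'d) \<times> (real^'d) \<Rightarrow> ((real^'d) \<times> (real^'d) \<times> (real^'d)) pmf" where
  "sarah_step n g H Jd \<eta> \<alpha> \<beta> p s =
     (case s of (w, v, D) \<Rightarrow>
       (let w' = sarah_w \<eta> \<alpha> w v D in
        bind_pmf (pmf_of_set {..<n}) (\<lambda>i.
        bind_pmf (bernoulli_pmf p) (\<lambda>c.
        bind_pmf rademacher (\<lambda>z.
        bind_pmf Jd (\<lambda>J.
        return_pmf (w',
                    if c then gradP n g w' else v + g i w' - g i w,
                    \<beta> *\<^sub>R D + (1 - \<beta>) *\<^sub>R hds H w' z J)))))))"

primrec sarah_dist ::
  "nat \<Rightarrow> (nat \<Rightarrow> real^'d \<Rightarrow> real^'d) \<Rightarrow> (nat \<Rightarrow> real^'d \<Rightarrow> real^'d^'d) \<Rightarrow> nat set pmf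
   \<Rightarrow> real^'d \<Rightarrow> nat \<Rightarrow> real \<Rightarrow> real \<Rightarrow> real \<Rightarrow> real \<Rightarrow> nat
   \<Rightarrow> ((real^'d) \<times> (real^'d) \<times> (real^'d)) pmf" where
  "sarah_dist n g H Jd w0 m \<eta> \<alpha> \<beta> p 0 =
     map_pmf (\<lambda>D. (w0, gradP n g w0, D)) (d0_dist H Jd w0 m)"
| "sarah_dist n g H Jd w0 m \<eta> \<alpha> \<beta> p (Suc t) =
     bind_pmf (sarah_dist n g H Jd w0 m \<eta> \<alpha> \<beta> p t) (sarah_step n g H Jd \<eta> \<alpha> \<beta> p)"

end

theory Submission imports Defs begin

lemma fin_rad: "finite (set_pmf (rademacher :: (real^'d) pmf))"
proof -
  let ?S = "{z::real^'d. \<forall>i. z $ i = 1 \<or> z $ i = -1}"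
  have sub: "?S \<subseteq> range (\<lambda>f::'d \<Rightarrow> bool. \<chi> i. if f i then 1 else -1)"
  proof
    fix z assume "z \<in> ?S"
    then have "z = (\<chi> i. if z $ i = 1 then 1 else -1)" by (auto simp: vec_eq_iff)
    then show "z \<in> range (\<lambda>f::'d \<Rightarrow> bool. \<chi> i. if f i then 1 else -1)" by (rule range_eqI[where x="\<lambda>i. z $ i = 1"])
  qed
  have fin: "finite ?S" by (rule finite_subset[OF sub]) simp
  have "(1::real^'d) \<in> ?S" by simp
  then have ne: "?S \<noteq> {}" by blast
  show ?thesis unfolding rademacher_def using fin ne by simp
qed

lemma fin_Jd:
  assumes "\<And>J. J \<in> set_pmf Jd \<Longrightarrow> J \<noteq> {} \<and> J \<subseteq> {..<n::nat}"
  shows "finite (set_pmf Jd)"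
  by (rule finite_subset[of _ "Pow {..<n}"]) (use assms in auto)

lemma fin_d0: "finite (set_pmf Jd) \<Longrightarrow> finite (set_pmf (d0_sum H Jd w k))"
  by (induction k) (auto simp: fin_rad)

lemma fin_bern: "finite (set_pmf (bernoulli_pmf p))"
  by (rule finite_subset[OF subset_UNIV]) simp

lemma fin_step: "finite (set_pmf Jd) \<Longrightarrow> n \<ge> 1 \<Longrightarrow> finite (set_pmf (sarah_step n g H Jd \<eta> \<alpha> \<beta> p s))"
proof -
  assume a: "finite (set_pmf Jd)" "n \<ge> 1"
  have "finite (set_pmf (pmf_of_set {..<n}))" using a by (subst set_pmf_of_set) (auto simp: lessThan_empty_iff)
  then show ?thesis unfolding sarah_step_def
    by (cases s) (auto simp: fin_rad fin_bern a Let_def)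
qed

lemma fin_dist:
  assumes "finite (set_pmf Jd)" "n \<ge> 1"
  shows "finite (set_pmf (sarah_dist n g H Jd w0 m \<eta> \<alpha> \<beta> p t))"
  using assms by (induction t) (auto simp: fin_step d0_dist_def fin_d0)

lemma exp_bind_fin:
  fixes h :: "'b \<Rightarrow> real"
  assumes "finite (set_pmf M)" "\<And>x. x \<in> set_pmf M \<Longrightarrow> finite (set_pmf (N x))"
  shows "measure_pmf.expectation (M \<bind> N) h = measure_pmf.expectation M (\<lambda>x. measure_pmf.expectation (N x) h)"
  using assms by (subst pmf_expectation_bind[of "set_pmf M"]) (auto simp: integral_measure_pmf[of "set_pmf M"])

lemma fin_ul: "n \<ge> 1 \<Longrightarrow> finite (set_pmf (pmf_of_set {..<n::nat}))"
  by (subst set_pmf_of_set) (auto simp: lessThan_empty_iff)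

lemma exp_step:
  assumes "finite (set_pmf Jd)" "n \<ge> 1" "0 \<le> p" "p \<le> 1"
  shows "measure_pmf.expectation (sarah_step n g H Jd \<eta> \<alpha> \<beta> p (w, v, D)) (\<lambda>(w, v, D). (norm (v - gradP n g w))\<^sup>2)
    = (1 - p) * (\<Sum>i<n. (norm (v + g i (sarah_w \<eta> \<alpha> w v D) - g i w - gradP n g (sarah_w \<eta> \<alpha> w v D)))\<^sup>2) / n"
  unfolding sarah_step_def Let_def
  using assms
  apply (simp add: exp_bind_fin fin_ul fin_bern fin_rad)
  apply (subst integral_pmf_of_set)
    apply (auto simp: lessThan_empty_iff)
  done

lemma key_alg:
  fixes e abar :: "'a::real_inner" and a :: "nat \<Rightarrow> 'a"
  assumes "(\<Sum>i<n. a i) = real n *\<^sub>R abar"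
  shows "(\<Sum>i<n. (norm (e + a i - abar))\<^sup>2) \<le> real n * (norm e)\<^sup>2 + (\<Sum>i<n. (norm (a i))\<^sup>2)"
proof -
  define b where "b = e - abar"
  have "(\<Sum>i<n. (norm (e + a i - abar))\<^sup>2) = (\<Sum>i<n. (norm b)\<^sup>2 + 2 * (b \<bullet> a i) + (norm (a i))\<^sup>2)"
    by (rule sum.cong) (auto simp: b_def power2_norm_eq_inner inner_add_left inner_add_right inner_diff_left inner_diff_right inner_commute algebra_simps)
  also have "\<dots> = real n * (norm b)\<^sup>2 + 2 * (b \<bullet> (\<Sum>i<n. a i)) + (\<Sum>i<n. (norm (a i))\<^sup>2)"
    by (simp add: sum.distrib inner_sum_right sum_distrib_left)
  also have "\<dots> = real n * ((norm b)\<^sup>2 + 2 * (b \<bullet> abar)) + (\<Sum>i<n. (norm (a i))\<^sup>2)"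
    by (simp add: assms algebra_simps)
  also have "(norm b)\<^sup>2 + 2 * (b \<bullet> abar) = (norm e)\<^sup>2 - (norm abar)\<^sup>2"
    by (simp add: b_def power2_norm_eq_inner inner_add_left inner_add_right inner_diff_left inner_diff_right inner_commute algebra_simps)
  finally have "(\<Sum>i<n. (norm (e + a i - abar))\<^sup>2) = real n * ((norm e)\<^sup>2 - (norm abar)\<^sup>2) + (\<Sum>i<n. (norm (a i))\<^sup>2)" .
  moreover have "0 \<le> real n * (norm abar)\<^sup>2" by simp
  ultimately show ?thesis unfolding right_diff_distrib by linarith
qed

lemma dnorm_bound:
  assumes "\<alpha> > 0"
  shows "(norm (x::real^'d))\<^sup>2 \<le> dnorm2 (dhat \<alpha> D) x / \<alpha>"
proof -
  have "\<alpha> * (norm x)\<^sup>2 = (\<Sum>i\<in>UNIV. \<alpha> * (x $ i)\<^sup>2)"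
    unfolding power2_norm_eq_inner inner_vec_def by (simp add: sum_distrib_left power2_eq_square)
  also have "\<dots> \<le> dnorm2 (dhat \<alpha> D) x"
    unfolding dnorm2_def dhat_def
    by (rule sum_mono) (auto intro: mult_right_mono)
  finally show ?thesis using assms by (simp add: field_simps)
qed

theorem lemma4:
  fixes f :: "nat \<Rightarrow> real^'d \<Rightarrow> real"
    and g :: "nat \<Rightarrow> real^'d \<Rightarrow> real^'d"
    and H :: "nat \<Rightarrow> real^'d \<Rightarrow> real^'d^'d"
    and Jd :: "nat set pmf"
    and w0 :: "real^'d"
    and n m t :: nat and L \<eta> \<alpha> \<beta> p :: real
  assumes n: "n \<ge> 1"
    and alpha: "\<alpha> > 0" and beta: "0 < \<beta>" "\<beta> < 1" and m: "m \<ge> 1" and eta: "\<eta> > 0"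
    and p: "0 < p" "p \<le> 1"
    and grad: "\<And>i w. i < n \<Longrightarrow> (f i has_derivative (\<lambda>h. g i w \<bullet> h)) (at w)"
    and hess: "\<And>i w. i < n \<Longrightarrow> (g i has_derivative (\<lambda>h. H i w *v h)) (at w)"
    and lip: "\<And>i x y. i < n \<Longrightarrow> norm (g i x - g i y) \<le> L * norm (x - y)"
    and lipP: "\<And>x y. norm (gradP n g x - gradP n g y) \<le> L * norm (x - y)"
    and Jd: "\<And>J. J \<in> set_pmf Jd \<Longrightarrow> J \<noteq> {} \<and> J \<subseteq> {..<n}"
  shows "measure_pmf.expectation (sarah_dist n g H Jd w0 m \<eta> \<alpha> \<beta> p (Suc t))
            (\<lambda>(w, v, D). (norm (v - gradP n g w))\<^sup>2)
         \<le> (1 - p) * measure_pmf.expectation (sarah_dist n g H Jd w0 m \<eta> \<alpha> \<beta> p t)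
                 (\<lambda>(w, v, D). (norm (v - gradP n g w))\<^sup>2)
           + (1 - p) * L\<^sup>2 / \<alpha> * measure_pmf.expectation (sarah_dist n g H Jd w0 m \<eta> \<alpha> \<beta> p t)
                 (\<lambda>(w, v, D). dnorm2 (dhat \<alpha> D) (sarah_w \<eta> \<alpha> w v D - w))"
proof -
  let ?Q = "sarah_dist n g H Jd w0 m \<eta> \<alpha> \<beta> p t"
  let ?F = "\<lambda>(w::real^'d, v::real^'d, D::real^'d). (norm (v - gradP n g w))\<^sup>2"
  let ?G = "\<lambda>(w, v, D). dnorm2 (dhat \<alpha> D) (sarah_w \<eta> \<alpha> w v D - w)"
  let ?S = "\<lambda>(w, v, D). (1 - p) * (\<Sum>i<n. (norm (v + g i (sarah_w \<eta> \<alpha> w v D) - g i w - gradP n g (sarah_w \<eta> \<alpha> w v D)))\<^sup>2) / n"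
  have finJ: "finite (set_pmf Jd)" using fin_Jd Jd by blast
  have finQ: "finite (set_pmf ?Q)" using fin_dist[OF finJ n] .
  have "measure_pmf.expectation (sarah_dist n g H Jd w0 m \<eta> \<alpha> \<beta> p (Suc t)) ?F
      = measure_pmf.expectation ?Q (\<lambda>s. measure_pmf.expectation (sarah_step n g H Jd \<eta> \<alpha> \<beta> p s) ?F)"
    using finQ by (simp add: exp_bind_fin fin_step[OF finJ n])
  also have "\<dots> = measure_pmf.expectation ?Q ?S"
    by (rule Bochner_Integration.integral_cong) (auto simp: exp_step[OF finJ n less_imp_le[OF p(1)] p(2)])
  also have "\<dots> \<le> measure_pmf.expectation ?Q (\<lambda>s. (1 - p) * ?F s + (1 - p) * L\<^sup>2 / \<alpha> * ?G s)"
  proof (rule integral_mono)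
    show "integrable (measure_pmf ?Q) ?S" by (rule integrable_measure_pmf_finite[OF finQ])
    show "integrable (measure_pmf ?Q) (\<lambda>s. (1 - p) * ?F s + (1 - p) * L\<^sup>2 / \<alpha> * ?G s)"
      by (rule integrable_measure_pmf_finite[OF finQ])
    fix s :: "(real^'d) \<times> (real^'d) \<times> (real^'d)"
    obtain w v D where s: "s = (w, v, D)" by (cases s) auto
    define w' where "w' = sarah_w \<eta> \<alpha> w v D"
    define a where "a = (\<lambda>i. g i w' - g i w)"
    define abar where "abar = gradP n g w' - gradP n g w"
    define e where "e = v - gradP n g w"
    have suma: "(\<Sum>i<n. a i) = real n *\<^sub>R abar"
      using n by (simp add: a_def abar_def gradP_def sum_subtractf scaleR_diff_right)
    have eq: "\<And>i. v + g i w' - g i w - gradP n g w' = e + a i - abar"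
      by (simp add: a_def abar_def e_def algebra_simps)
    have la: "(norm (a i))\<^sup>2 \<le> L\<^sup>2 * (norm (w' - w))\<^sup>2" if "i < n" for i
    proof -
      have "norm (a i) \<le> L * norm (w' - w)" using lip[OF that] by (simp add: a_def)
      then have "(norm (a i))\<^sup>2 \<le> (L * norm (w' - w))\<^sup>2"
        by (intro power_mono) auto
      then show ?thesis by (simp add: power_mult_distrib)
    qed
    have "(\<Sum>i<n. (norm (e + a i - abar))\<^sup>2) \<le> real n * (norm e)\<^sup>2 + (\<Sum>i<n. (norm (a i))\<^sup>2)"
      by (rule key_alg[OF suma])
    also have "(\<Sum>i<n. (norm (a i))\<^sup>2) \<le> (\<Sum>i<n. L\<^sup>2 * (norm (w' - w))\<^sup>2)"
      by (rule sum_mono) (use la in auto)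
    also have "\<dots> \<le> real n * (L\<^sup>2 * (dnorm2 (dhat \<alpha> D) (w' - w) / \<alpha>))"
    proof -
      have "L\<^sup>2 * (norm (w' - w))\<^sup>2 \<le> L\<^sup>2 * (dnorm2 (dhat \<alpha> D) (w' - w) / \<alpha>)"
        by (rule mult_left_mono[OF dnorm_bound[OF alpha]]) simp
      then have "real n * (L\<^sup>2 * (norm (w' - w))\<^sup>2) \<le> real n * (L\<^sup>2 * (dnorm2 (dhat \<alpha> D) (w' - w) / \<alpha>))"
        by (rule mult_left_mono) simp
      then show ?thesis by simp
    qed
    finally have b1: "(\<Sum>i<n. (norm (e + a i - abar))\<^sup>2) / real n \<le> (norm e)\<^sup>2 + L\<^sup>2 / \<alpha> * dnorm2 (dhat \<alpha> D) (w' - w)"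
      using n by (simp add: field_simps)
    have "?S s = (1 - p) * ((\<Sum>i<n. (norm (e + a i - abar))\<^sup>2) / real n)"
      by (simp add: s eq w'_def[symmetric])
    also have "\<dots> \<le> (1 - p) * ((norm e)\<^sup>2 + L\<^sup>2 / \<alpha> * dnorm2 (dhat \<alpha> D) (w' - w))"
      by (rule mult_left_mono[OF b1]) (use p in simp)
    also have "\<dots> = (1 - p) * ?F s + (1 - p) * L\<^sup>2 / \<alpha> * ?G s"
      by (simp add: s e_def w'_def algebra_simps)
    finally show "?S s \<le> (1 - p) * ?F s + (1 - p) * L\<^sup>2 / \<alpha> * ?G s" .
  qed
  also have "\<dots> = (1 - p) * measure_pmf.expectation ?Q ?F + (1 - p) * L\<^sup>2 / \<alpha> * measure_pmf.expectation ?Q ?G"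
    by (simp add: Bochner_Integration.integral_add integrable_measure_pmf_finite[OF finQ])
  finally show ?thesis .
qed

end
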